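(* Let $G$ be a connected graph on $n$ vertices. Then $b(G^2)\le \lceil \sqrt{n}\,\rceil$.
   Context: $G^2$ is the graph on $V(G)$ in which distinct $u,v$ are adjacent iff $d_G(u,v)\le 2$. Graph burning: in each round $i$ a vertex (source) is chosen and burned, and simultaneously every unburned neighbour of a vertex burned by the end of round $i-1$ becomes burned; burned vertices stay burned. The burning number $b(G)$ is the minimum number of rounds needed to burn all vertices. *)

theory Defs
  imports Complex_Main
begin

definition simple_graph :: "'a set \<Rightarrow> ('a \<Rightarrow> 'a \<Rightarrow> bool) \<Rightarrow> bool" where
  "simple_graph V E \<longleftrightarrow> finite V \<and> (\<forall>u v. E u v \<longrightarrow> u \<in> V \<and> v \<in> V)
     \<and> (\<forall>u v. E u v \<longrightarrow> E v u) \<and> (\<forall>u. \<not> E u u)"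

definition connected_graph :: "'a set \<Rightarrow> ('a \<Rightarrow> 'a \<Rightarrow> bool) \<Rightarrow> bool" where
  "connected_graph V E \<longleftrightarrow> simple_graph V E \<and> (\<forall>u\<in>V. \<forall>v\<in>V. E\<^sup>*\<^sup>* u v)"

definition graph_square :: "'a set \<Rightarrow> ('a \<Rightarrow> 'a \<Rightarrow> bool) \<Rightarrow> 'a \<Rightarrow> 'a \<Rightarrow> bool" where
  "graph_square V E u v \<longleftrightarrow> u \<in> V \<and> v \<in> V \<and> u \<noteq> v \<and>
     (E u v \<or> (\<exists>w\<in>V. E u w \<and> E w v))"

text \<open>Burning process: s i is the source chosen in round i+1.
burned E s k is the set of vertices burned after k rounds.\<close>
fun burned :: "('a \<Rightarrow> 'a \<Rightarrow> bool) \<Rightarrow> (nat \<Rightarrow> 'a) \<Rightarrow> nat \<Rightarrow> 'a set" where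
  "burned E s 0 = {}"
| "burned E s (Suc i) = burned E s i \<union> {v. \<exists>u\<in>burned E s i. E u v} \<union> {s i}"

definition burns_in :: "'a set \<Rightarrow> ('a \<Rightarrow> 'a \<Rightarrow> bool) \<Rightarrow> nat \<Rightarrow> bool" where
  "burns_in V E k \<longleftrightarrow> (\<exists>s. (\<forall>i<k. s i \<in> V) \<and> burned E s k = V)"

definition burning_number :: "'a set \<Rightarrow> ('a \<Rightarrow> 'a \<Rightarrow> bool) \<Rightarrow> nat" where
  "burning_number V E = (LEAST k. burns_in V E k)"

end

theory Submission
  imports Defs
begin

lemma burned_mono: "i \<le> j \<Longrightarrow> burned F s i \<subseteq> burned F s j"
proof (induction j)
  case 0 then show ?case by simp
next
  case (Suc j)
  then show ?case by (cases "i = Suc j") auto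
qed

lemma burned_reach: "(F ^^ t) (s a) v \<Longrightarrow> v \<in> burned F s (Suc a + t)"
proof (induction t arbitrary: v)
  case 0 then show ?case by simp
next
  case (Suc t)
  then obtain y where "(F ^^ t) (s a) y" "F y v" by (auto simp: relcompp_apply)
  with Suc.IH have "y \<in> burned F s (Suc a + t)" by blast
  with \<open>F y v\<close> show ?case by auto
qed

lemma burned_sub: "(\<forall>u v. F u v \<longrightarrow> v \<in> V) \<Longrightarrow> (\<forall>i<k. s i \<in> V) \<Longrightarrow> burned F s k \<subseteq> V"
  by (induction k) auto

locale ptree =
  fixes V :: "'a set" and E :: "'a \<Rightarrow> 'a \<Rightarrow> bool" and r :: 'a
    and p :: "'a \<Rightarrow> 'a" and d :: "'a \<Rightarrow> nat"
  assumes fin: "finite V" and rV: "r \<in> V" and pr: "p r = r" and pV: "v \<in> V \<Longrightarrow> p v \<in> V"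
    and pE: "v \<in> V \<Longrightarrow> v \<noteq> r \<Longrightarrow> E (p v) v"
    and pd: "v \<in> V \<Longrightarrow> v \<noteq> r \<Longrightarrow> Suc (d (p v)) = d v"
    and dr: "d r = 0"
begin

lemma L1: "v \<in> V \<Longrightarrow> (p^^j) v \<in> V"
  by (induction j) (auto simp: pV)

lemma d0: "v \<in> V \<Longrightarrow> d v = 0 \<Longrightarrow> v = r"
  using pd by fastforce

lemma L2: "v \<in> V \<Longrightarrow> j \<le> d v \<Longrightarrow> d ((p^^j) v) = d v - j"
proof (induction j)
  case 0 then show ?case by simp
next
  case (Suc j)
  let ?y = "(p^^j) v"
  have y: "?y \<in> V" using L1 Suc by blast
  have "d ?y = d v - j" using Suc by simp
  then have "?y \<noteq> r" using Suc dr by auto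
  then have "Suc (d (p ?y)) = d ?y" using pd y by blast
  then show ?case using \<open>d ?y = d v - j\<close> by simp
qed

lemma L3: "v \<in> V \<Longrightarrow> (p^^(d v)) v = r"
  using L2[of v "d v"] L1[of v "d v"] d0 by simp

lemma Lr: "(p^^n) r = r"
  by (induction n) (auto simp: pr)

lemma L4:
  assumes "v \<in> V" "(p^^j) v = w" "w \<noteq> r"
  shows "j \<le> d v \<and> d w = d v - j"
proof -
  have "j \<le> d v"
  proof (rule ccontr)
    assume "\<not> j \<le> d v"
    then have "j = (j - d v) + d v" by simp
    then have "(p^^j) v = (p^^(j - d v)) ((p^^(d v)) v)"
      by (metis funpow_add comp_apply)
    also have "\<dots> = r" using L3 assms Lr by simp
    finally show False using assms by simp
  qed
  then show ?thesis using L2 assms by blast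
qed

lemma closed_pow: "(\<forall>v\<in>R. p v \<in> R) \<Longrightarrow> v \<in> R \<Longrightarrow> (p^^j) v \<in> R"
  by (induction j) auto

lemma core:
  "R \<subseteq> V \<Longrightarrow> (\<forall>v\<in>R. p v \<in> R) \<Longrightarrow> card R \<le> k*k \<Longrightarrow>
   \<exists>x. (\<forall>i<k. x i \<in> V) \<and> (\<forall>v\<in>R. \<exists>i<k. \<exists>j\<le>2*i. (p^^j) v = x i)"
proof (induction k arbitrary: R)
  case 0
  then have "R = {}" using fin finite_subset by fastforce
  then show ?case by auto
next
  case (Suc m)
  have finR: "finite R" using Suc.prems fin finite_subset by blast
  show ?case
  proof (cases "\<forall>v\<in>R. d v \<le> 2*m")
    case True
    show ?thesis
    proof (intro exI[of _ "\<lambda>_. r"] conjI ballI allI impI)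
      fix i assume "i < Suc m" show "(\<lambda>_. r) i \<in> V" using rV by simp
    next
      fix v assume "v \<in> R"
      then have "v \<in> V" "d v \<le> 2*m" using True Suc.prems by auto
      then show "\<exists>i<Suc m. \<exists>j\<le>2*i. (p^^j) v = (\<lambda>_. r) i" using L3 by (intro exI[of _ m]) auto
    qed
  next
    case False
    then obtain v0 where v0: "v0 \<in> R" "d v0 > 2*m" by (auto simp: not_le)
    define M where "M = Max (d ` R)"
    have "M \<in> d ` R" unfolding M_def using finR v0 by (intro Max_in) auto
    then obtain u where u: "u \<in> R" "d u = M" by auto
    have maxu: "\<And>v. v \<in> R \<Longrightarrow> d v \<le> d u" using u finR unfolding M_def by simp
    have du: "d u > 2*m" using maxu[OF v0(1)] v0 by simp
    have uV: "u \<in> V" using u Suc.prems by auto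
    define w where "w = (p^^(2*m)) u"
    have dw: "d w = d u - 2*m" unfolding w_def using L2 uV du by simp
    have wr: "w \<noteq> r" using dw du dr by auto
    have wV: "w \<in> V" unfolding w_def using L1 uV by blast
    define S where "S = {v\<in>R. \<exists>j. (p^^j) v = w}"
    define R' where "R' = R - S"
    have SR: "S \<subseteq> R" unfolding S_def by auto
    have img: "(\<lambda>j. (p^^j) u) ` {..2*m} \<subseteq> S"
    proof
      fix y assume "y \<in> (\<lambda>j. (p^^j) u) ` {..2*m}"
      then obtain j where j: "j \<le> 2*m" "y = (p^^j) u" by auto
      have "y \<in> R" using j closed_pow Suc.prems u by blast
      moreover have "(p^^(2*m - j)) y = w"
        using j unfolding w_def by (metis funpow_add comp_apply le_add_diff_inverse2)
      ultimately show "y \<in> S" unfolding S_def by blast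
    qed
    have inj: "inj_on (\<lambda>j. (p^^j) u) {..2*m}"
    proof (rule inj_onI)
      fix a b assume ab: "a \<in> {..2*m}" "b \<in> {..2*m}" "(p^^a) u = (p^^b) u"
      then have "d u - a = d u - b" using L2 uV du
        by (metis atMost_iff dual_order.trans less_imp_le_nat)
      then show "a = b" using ab du by simp
    qed
    have "card ((\<lambda>j. (p^^j) u) ` {..2*m}) = Suc (2*m)"
      using card_image[OF inj] by simp
    then have cS: "card S \<ge> Suc (2*m)"
      using card_mono[OF finite_subset[OF SR finR] img] by simp
    have cR': "card R' \<le> m*m"
      unfolding R'_def using card_Diff_subset[OF finite_subset[OF SR finR] SR] cS Suc.prems(3)
      by simp
    have cl': "\<forall>v\<in>R'. p v \<in> R'"
    proof
      fix v assume v: "v \<in> R'"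
      then have pvR: "p v \<in> R" using Suc.prems unfolding R'_def by auto
      show "p v \<in> R'"
      proof (rule ccontr)
        assume "p v \<notin> R'"
        then obtain j where "(p^^j) (p v) = w" using pvR unfolding R'_def S_def by auto
        then have "(p^^(Suc j)) v = w" by (simp add: funpow_Suc_right del: funpow.simps)
        then have "v \<in> S" using v unfolding R'_def S_def by blast
        then show False using v unfolding R'_def by blast
      qed
    qed
    have "R' \<subseteq> V" using Suc.prems unfolding R'_def by auto
    from Suc.IH[OF this cl' cR'] obtain x' where
      x': "\<forall>i<m. x' i \<in> V" "\<forall>v\<in>R'. \<exists>i<m. \<exists>j\<le>2*i. (p^^j) v = x' i" by blast
    show ?thesis
    proof (intro exI[of _ "x'(m := w)"] conjI ballI allI impI)
      fix i assume "i < Suc m" then show "(x'(m := w)) i \<in> V" using x' wV by auto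
    next
      fix v assume vR: "v \<in> R"
      show "\<exists>i<Suc m. \<exists>j\<le>2*i. (p^^j) v = (x'(m := w)) i"
      proof (cases "v \<in> S")
        case True
        then obtain j where j: "(p^^j) v = w" unfolding S_def by auto
        have vV: "v \<in> V" using vR Suc.prems by auto
        from L4[OF vV j wr] have "j \<le> d v" "d w = d v - j" by auto
        with dw maxu[OF vR] du have "j \<le> 2*m" by linarith
        then show ?thesis using j by (intro exI[of _ m]) auto
      next
        case False
        then have "v \<in> R'" using vR unfolding R'_def by auto
        then obtain i j where "i < m" "j \<le> 2*i" "(p^^j) v = x' i" using x' by blast
        then show ?thesis by (intro exI[of _ i]) auto
      qed
    qed
  qed
qed

lemma GS:
  assumes irr: "\<forall>u. \<not> E u u"
  shows "v \<in> V \<Longrightarrow> (p^^j) v = w \<Longrightarrow> \<exists>t. 2*t \<le> j+1 \<and> (graph_square V E ^^ t) w v"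
proof (induction j arbitrary: v rule: less_induct)
  case (less j)
  show ?case
  proof (cases j)
    case 0 then show ?thesis using less by (intro exI[of _ 0]) auto
  next
    case (Suc j1)
    note j1 = Suc
    show ?thesis
    proof (cases j1)
      case 0
      then have pw: "p v = w" using less j1 by simp
      show ?thesis
      proof (cases "v = r")
        case True then show ?thesis using pw pr by (intro exI[of _ 0]) auto
      next
        case False
        then have "E w v" using pE[of v] less(2) pw by simp
        then have "w \<noteq> v" using irr by auto
        then have "graph_square V E w v" unfolding graph_square_def
          using \<open>E w v\<close> pw pV less by auto
        then show ?thesis using j1 0 by (intro exI[of _ 1]) auto
      qed
    next
      case (Suc j2)
      have jj: "j = Suc (Suc j2)" using j1 Suc by simp
      have "(p^^j2) (p (p v)) = w" using less(3) jj
        by (simp add: funpow_Suc_right del: funpow.simps)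
      moreover have ppV: "p (p v) \<in> V" using pV less by blast
      ultimately obtain t where t: "2*t \<le> j2+1" "(graph_square V E ^^ t) w (p (p v))"
        using less.IH[of j2] jj by auto
      show ?thesis
      proof (cases "p (p v) = v")
        case True then show ?thesis using t jj by (intro exI[of _ t]) auto
      next
        case False
        then have vr: "v \<noteq> r" using pr by auto
        have e1: "E (p v) v" using pE vr less by blast
        have pvV: "p v \<in> V" using pV less by blast
        have "E (p (p v)) v \<or> (\<exists>z\<in>V. E (p (p v)) z \<and> E z v)"
        proof (cases "p v = r")
          case True then show ?thesis using e1 pr by auto
        next
          case False then show ?thesis using e1 pE pvV by blast
        qed
        then have "graph_square V E (p (p v)) v" unfolding graph_square_def
          using False ppV less by auto
        then have "(graph_square V E ^^ Suc t) w v" using t by auto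
        then show ?thesis using t jj by (intro exI[of _ "Suc t"]) auto
      qed
    qed
  qed
qed

end

theorem mainTheorem7:
  fixes V :: "'a set" and E :: "'a \<Rightarrow> 'a \<Rightarrow> bool"
  assumes "connected_graph V E"
  shows "int (burning_number V (graph_square V E)) \<le> \<lceil>sqrt (real (card V))\<rceil>"
proof (cases "V = {}")
  case True
  have "burns_in V (graph_square V E) 0" unfolding burns_in_def using True by simp
  then have "burning_number V (graph_square V E) = 0" unfolding burning_number_def
    by (rule Least_eq_0)
  then show ?thesis using True by simp
next
  case False
  have sg: "simple_graph V E" and conn: "\<forall>u\<in>V. \<forall>v\<in>V. E\<^sup>*\<^sup>* u v"
    using assms unfolding connected_graph_def by blast+
  have finV: "finite V" and EV: "\<And>u v. E u v \<Longrightarrow> u \<in> V \<and> v \<in> V" and irr: "\<forall>u. \<not> E u u"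
    using sg unfolding simple_graph_def by blast+
  obtain r where rV: "r \<in> V" using False by auto
  define d where "d v = (LEAST n. (E^^n) r v)" for v
  define p where "p v = (if v = r \<or> v \<notin> V then r else (SOME u. u \<in> V \<and> E u v \<and> Suc (d u) = d v))" for v
  have dI: "(E^^(d v)) r v" if "v \<in> V" for v
  proof -
    have "E\<^sup>*\<^sup>* r v" using conn rV that by simp
    then obtain n where "(E^^n) r v" unfolding rtranclp_power by (elim exE)
    then show ?thesis unfolding d_def by (rule LeastI)
  qed
  have dr: "d r = 0" unfolding d_def by (rule Least_eq_0) simp
  have ex: "\<exists>u. u \<in> V \<and> E u v \<and> Suc (d u) = d v" if "v \<in> V" "v \<noteq> r" for v
  proof -
    have "d v \<noteq> 0"
    proof
      assume "d v = 0"
      then have "(E^^0) r v" using dI[OF that(1)] by simp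
      then show False using that(2) by simp
    qed
    then obtain m where m: "d v = Suc m" using not0_implies_Suc by blast
    then have "(E^^(Suc m)) r v" using dI[OF that(1)] by simp
    then obtain u where u: "(E^^m) r u" "E u v" by (auto simp: relcompp_apply)
    have du: "d u \<le> m" unfolding d_def using u(1) by (rule Least_le)
    have "(E^^(d u)) r u" using dI EV u(2) by blast
    then have "(E^^(Suc (d u))) r v" using u(2) by (auto simp: relcompp_apply)
    then have "d v \<le> Suc (d u)" unfolding d_def by (rule Least_le)
    then have "Suc (d u) = d v" using du m by linarith
    then show ?thesis using u(2) EV[OF u(2)] by blast
  qed
  have pp: "p v \<in> V \<and> E (p v) v \<and> Suc (d (p v)) = d v" if "v \<in> V" "v \<noteq> r" for v
  proof -
    have "p v = (SOME u. u \<in> V \<and> E u v \<and> Suc (d u) = d v)" unfolding p_def using that by simp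
    then show ?thesis using someI_ex[OF ex[OF that]] by simp
  qed
  have ppr: "p r = r" unfolding p_def by simp
  have ppV: "p v \<in> V" if "v \<in> V" for v
  proof (cases "v = r")
    case True then show ?thesis using ppr rV by simp
  next
    case False then show ?thesis using pp that by blast
  qed
  interpret ptree V E r p d
  proof
    show "finite V" by (rule finV)
    show "r \<in> V" by (rule rV)
    show "p r = r" by (rule ppr)
    show "p v \<in> V" if "v \<in> V" for v using ppV that .
    show "E (p v) v" if "v \<in> V" "v \<noteq> r" for v using pp that by blast
    show "Suc (d (p v)) = d v" if "v \<in> V" "v \<noteq> r" for v using pp that by blast
    show "d r = 0" by (rule dr)
  qed
  define k where "k = nat \<lceil>sqrt (real (card V))\<rceil>"
  have "0 \<le> sqrt (real (card V))" by simp
  then have "0 \<le> \<lceil>sqrt (real (card V))\<rceil>" unfolding zero_le_ceiling by linarith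
  then have kc: "int k = \<lceil>sqrt (real (card V))\<rceil>" unfolding k_def by simp
  have rk: "real k = of_int \<lceil>sqrt (real (card V))\<rceil>" using kc by (metis of_int_of_nat_eq)
  have sk: "sqrt (real (card V)) \<le> real k" unfolding rk by (rule le_of_int_ceiling)
  have "(sqrt (real (card V)))^2 \<le> (real k)^2" by (rule power_mono[OF sk]) simp
  then have "real (card V) \<le> real k * real k" by (simp add: power2_eq_square)
  then have "real (card V) \<le> real (k*k)" by (simp only: of_nat_mult)
  then have ck: "card V \<le> k*k" by (simp only: of_nat_le_iff)
  have clV: "\<forall>v\<in>V. p v \<in> V" using pV by blast
  obtain x where x: "\<forall>i<k. x i \<in> V" "\<forall>v\<in>V. \<exists>i<k. \<exists>j\<le>2*i. (p^^j) v = x i"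
    using core[OF subset_refl clV ck] by blast
  define s where "s i = x (k - 1 - i)" for i
  have sV: "\<forall>i<k. s i \<in> V" unfolding s_def using x(1) by simp
  have "burned (graph_square V E) s k = V"
  proof
    show "burned (graph_square V E) s k \<subseteq> V"
    proof (rule burned_sub[where F="graph_square V E" and V=V and k=k and s=s])
      show "\<forall>u v. graph_square V E u v \<longrightarrow> v \<in> V" by (simp add: graph_square_def)
      show "\<forall>i<k. s i \<in> V" by (rule sV)
    qed
  next
    show "V \<subseteq> burned (graph_square V E) s k"
    proof
      fix v assume vV: "v \<in> V"
      then obtain i j where ij: "i < k" "j \<le> 2*i" "(p^^j) v = x i" using x by blast
      obtain t where t: "2*t \<le> j+1" "(graph_square V E ^^ t) (x i) v"
        using GS[OF irr vV ij(3)] by blast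
      have "x i = s (k - 1 - i)" unfolding s_def using ij by simp
      then have "(graph_square V E ^^ t) (s (k - 1 - i)) v" using t(2) by simp
      then have "v \<in> burned (graph_square V E) s (Suc (k - 1 - i) + t)" by (rule burned_reach)
      moreover have "Suc (k - 1 - i) + t \<le> k" using ij t by linarith
      ultimately show "v \<in> burned (graph_square V E) s k" using burned_mono[where F="graph_square V E" and s=s] by blast
    qed
  qed
  then have "burns_in V (graph_square V E) k" unfolding burns_in_def using sV by (intro exI[of _ s] conjI)
  then have "burning_number V (graph_square V E) \<le> k" unfolding burning_number_def
    by (rule Least_le)
  then show ?thesis unfolding kc[symmetric] by (simp only: of_nat_le_iff)
qed

end
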